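(* In the setting described in the context, for every $t\in\{0,1,\dots,T\}$ the value function $V^{(t)}_\theta(s)$, viewed as a function of $(\theta,s)$, is Lipschitz with constant $L_V^{(t)}\le 3T^2L_{R_\theta}\bar L_{f_\theta}^{T-t-1}$.
   Context: Transitions $s_{t+1}=f(s_t,a_t)+\zeta_t$ with $\zeta_t\sim p(\zeta)$ i.i.d.; deterministic policy $\pi_\theta$, $\theta\in\Theta\subseteq\mathbb{R}^{d_\Theta}$; $f_\theta(s)=f(s,\pi_\theta(s))$ and $R_\theta(s)=R(s,\pi_\theta(s))$, viewed as functions of $(\theta,s)$. Value functions: $V^{(T)}_\theta\equiv 0$ and $V^{(t)}_\theta(s)=R_\theta(s)+\mathbb{E}_{p(\zeta)}[V^{(t+1)}_\theta(f_\theta(s)+\zeta)]$ for $t=0,\dots,T-1$. $L_h$ denotes a Lipschitz constant (Euclidean norm) of $h$ jointly in $(\theta,s)$, and $\bar L_h=\max\{L_{\nabla h},L_h,1\}$. Standing assumption: $f_\theta,R_\theta$ are Lipschitz and twice continuously differentiable with Lipschitz first derivative. *)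

theory Defs
  imports "HOL-Analysis.Analysis" "HOL-Probability.Probability"
begin

definition C2_lip_deriv ::
  "('x::euclidean_space \<Rightarrow> 'y::euclidean_space) \<Rightarrow> 'x set \<Rightarrow> real \<Rightarrow> bool" where
  "C2_lip_deriv h S Ld \<longleftrightarrow>
     (\<exists>h' :: 'x \<Rightarrow> ('x \<Rightarrow>\<^sub>L 'y).
        (\<forall>x\<in>S. (h has_derivative blinfun_apply (h' x)) (at x within S)) \<and>
        Ld-lipschitz_on S h' \<and>
        (\<exists>h'' :: 'x \<Rightarrow> ('x \<Rightarrow>\<^sub>L ('x \<Rightarrow>\<^sub>L 'y)).
           (\<forall>x\<in>S. (h' has_derivative blinfun_apply (h'' x)) (at x within S)) \<and>
           continuous_on S h''))"

fun Vsteps ::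
  "('p \<Rightarrow> 's::euclidean_space \<Rightarrow> 's) \<Rightarrow> ('p \<Rightarrow> 's \<Rightarrow> real) \<Rightarrow> 's measure
    \<Rightarrow> nat \<Rightarrow> 'p \<Rightarrow> 's \<Rightarrow> real" where
  "Vsteps fth Rth P 0 th s = 0"
| "Vsteps fth Rth P (Suc k) th s =
     Rth th s + (\<integral>\<zeta>. Vsteps fth Rth P k th (fth th s + \<zeta>) \<partial>P)"

definition Vval ::
  "('p \<Rightarrow> 's::euclidean_space \<Rightarrow> 's) \<Rightarrow> ('p \<Rightarrow> 's \<Rightarrow> real) \<Rightarrow> 's measure
    \<Rightarrow> nat \<Rightarrow> nat \<Rightarrow> 'p \<Rightarrow> 's \<Rightarrow> real" where
  "Vval fth Rth P T t = Vsteps fth Rth P (T - t)"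

end

theory Submission
  imports Defs
begin

lemma int_diff_bound:
  fixes g1 g2 :: "'s \<Rightarrow> real"
  assumes P: "prob_space p"
    and m1: "g1 \<in> borel_measurable p" and m2: "g2 \<in> borel_measurable p"
    and b: "\<And>z. \<bar>g1 z - g2 z\<bar> \<le> c"
  shows "\<bar>integral\<^sup>L p g1 - integral\<^sup>L p g2\<bar> \<le> c"
proof -
  interpret prob_space p by (rule P)
  have c0: "0 \<le> c" using b[of undefined] by linarith
  have id: "integrable p (\<lambda>z. g1 z - g2 z)"
    by (rule integrable_const_bound[where B=c]) (use b m1 m2 in auto)
  show ?thesis
  proof (cases "integrable p g1")
    case True
    have i2: "integrable p g2"
    proof -
      have "integrable p (\<lambda>z. g1 z - (g1 z - g2 z))" by (rule Bochner_Integration.integrable_diff[OF True id])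
      then show ?thesis by simp
    qed
    have "integral\<^sup>L p g1 - integral\<^sup>L p g2 = integral\<^sup>L p (\<lambda>z. g1 z - g2 z)"
      using True i2 by simp
    also have "\<bar>\<dots>\<bar> \<le> c"
    proof -
      have "integral\<^sup>L p (\<lambda>z. g1 z - g2 z) \<le> c"
        by (rule integral_le_const) (use id b abs_le_D1 in auto)
      moreover have "- c \<le> integral\<^sup>L p (\<lambda>z. g1 z - g2 z)"
      proof (rule integral_ge_const)
        show "AE z in p. - c \<le> g1 z - g2 z"
        proof (rule AE_I2)
          fix z show "- c \<le> g1 z - g2 z" using b[of z] by linarith
        qed
      qed (rule id)
      ultimately show ?thesis by linarith
    qed
    finally show ?thesis .
  next
    case False
    have i2: "\<not> integrable p g2"
    proof
      assume "integrable p g2"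
      then have "integrable p (\<lambda>z. g2 z + (g1 z - g2 z))" using Bochner_Integration.integrable_add[OF \<open>integrable p g2\<close> id] by simp
      then show False using False by simp
    qed
    show ?thesis using False i2 c0 by (simp add: not_integrable_integral_eq)
  qed
qed

lemma dist_pair_le: "dist (a, b) (c, d) \<le> dist a c + dist b d"
proof -
  have "sqrt ((dist a c)\<^sup>2 + (dist b d)\<^sup>2) \<le> sqrt ((dist a c + dist b d)\<^sup>2)"
    by (rule real_sqrt_le_mono) (simp add: power2_eq_square algebra_simps)
  then show ?thesis by (simp add: dist_Pair_Pair)
qed

lemma V_bound:
  fixes fth :: "'p::euclidean_space \<Rightarrow> 's::euclidean_space \<Rightarrow> 's"
    and Rth :: "'p \<Rightarrow> 's \<Rightarrow> real"
  assumes P: "prob_space p" and Pb: "sets p = sets borel"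
    and fl: "Lf-lipschitz_on (\<Theta> \<times> UNIV) (\<lambda>(\<theta>, s). fth \<theta> s)"
    and Rl: "LR-lipschitz_on (\<Theta> \<times> UNIV) (\<lambda>(\<theta>, s). Rth \<theta> s)"
    and M1: "1 \<le> M" and LfM: "Lf \<le> M"
  shows "\<forall>\<theta>\<in>\<Theta>. \<forall>\<theta>'\<in>\<Theta>. \<forall>s s'. \<bar>Vsteps fth Rth p (Suc k) \<theta> s - Vsteps fth Rth p (Suc k) \<theta>' s'\<bar>
     \<le> LR * M ^ k * (real (Suc k) ^ 2 * dist \<theta> \<theta>' + real (Suc k) * dist s s')"
proof (induction k)
  case 0
  show ?case
  proof (intro ballI allI)
    fix \<theta> \<theta>' s s' assume "\<theta> \<in> \<Theta>" "\<theta>' \<in> \<Theta>"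
    then have "dist (Rth \<theta> s) (Rth \<theta>' s') \<le> LR * dist (\<theta>, s) (\<theta>', s')"
      using Rl unfolding lipschitz_on_def by fastforce
    also have "\<dots> \<le> LR * (dist \<theta> \<theta>' + dist s s')"
      using Rl unfolding lipschitz_on_def by (intro mult_left_mono dist_pair_le) auto
    finally show "\<bar>Vsteps fth Rth p (Suc 0) \<theta> s - Vsteps fth Rth p (Suc 0) \<theta>' s'\<bar>
     \<le> LR * M ^ 0 * (real (Suc 0) ^ 2 * dist \<theta> \<theta>' + real (Suc 0) * dist s s')"
      by (simp add: dist_real_def)
  qed
next
  case (Suc k)
  define V where "V = Vsteps fth Rth p (Suc k)"
  define A where "A = LR * M ^ k * real (Suc k) ^ 2"
  define B where "B = LR * M ^ k * real (Suc k)"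
  have LR0: "0 \<le> LR" and Lf0: "0 \<le> Lf" using Rl fl by (auto simp: lipschitz_on_def)
  have A0: "0 \<le> A" and B0: "0 \<le> B" using LR0 M1 by (auto simp: A_def B_def)
  have IH: "\<bar>V \<theta> s - V \<theta>' s'\<bar> \<le> A * dist \<theta> \<theta>' + B * dist s s'"
    if "\<theta> \<in> \<Theta>" "\<theta>' \<in> \<Theta>" for \<theta> \<theta>' s s'
    using Suc.IH that unfolding V_def A_def B_def by (auto simp: algebra_simps)
  have meas: "(\<lambda>z. V \<theta> (y + z)) \<in> borel_measurable p" if "\<theta> \<in> \<Theta>" for \<theta> y
  proof -
    have "B-lipschitz_on UNIV (\<lambda>z. V \<theta> (y + z))"
    proof (rule lipschitz_onI)
      fix x z :: 's
      show "dist (V \<theta> (y + x)) (V \<theta> (y + z)) \<le> B * dist x z"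
        using IH[OF that that, of "y + x" "y + z"] by (simp add: dist_real_def dist_norm)
    qed (rule B0)
    then have "continuous_on UNIV (\<lambda>z. V \<theta> (y + z))" by (rule lipschitz_on_continuous_on)
    then have "(\<lambda>z. V \<theta> (y + z)) \<in> borel_measurable borel" by (rule borel_measurable_continuous_onI)
    then show ?thesis by (subst measurable_cong_sets[OF Pb refl])
  qed
  show ?case
  proof (intro ballI allI)
    fix \<theta> \<theta>' and s s' :: 's assume th: "\<theta> \<in> \<Theta>" "\<theta>' \<in> \<Theta>"
    define d1 where "d1 = dist \<theta> \<theta>'"
    define d2 where "d2 = dist s s'"
    have d10: "0 \<le> d1" and d20: "0 \<le> d2" by (auto simp: d1_def d2_def)
    have "dist (Rth \<theta> s) (Rth \<theta>' s') \<le> LR * dist (\<theta>, s) (\<theta>', s')"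
      using Rl th unfolding lipschitz_on_def by fastforce
    also have "\<dots> \<le> LR * (d1 + d2)"
      unfolding d1_def d2_def by (rule mult_left_mono[OF dist_pair_le LR0])
    finally have hR: "\<bar>Rth \<theta> s - Rth \<theta>' s'\<bar> \<le> LR * (d1 + d2)" by (simp add: dist_real_def)
    have "dist (fth \<theta> s) (fth \<theta>' s') \<le> Lf * dist (\<theta>, s) (\<theta>', s')"
      using fl th unfolding lipschitz_on_def by fastforce
    also have "\<dots> \<le> Lf * (d1 + d2)"
      unfolding d1_def d2_def by (rule mult_left_mono[OF dist_pair_le Lf0])
    also have "\<dots> \<le> M * (d1 + d2)" using LfM d10 d20 by (simp add: mult_right_mono)
    finally have hf: "dist (fth \<theta> s) (fth \<theta>' s') \<le> M * (d1 + d2)" .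
    have hI: "\<bar>(\<integral>z. V \<theta> (fth \<theta> s + z) \<partial>p) - (\<integral>z. V \<theta>' (fth \<theta>' s' + z) \<partial>p)\<bar>
        \<le> A * d1 + B * dist (fth \<theta> s) (fth \<theta>' s')"
    proof (rule int_diff_bound[OF P meas[OF th(1)] meas[OF th(2)]])
      fix z
      show "\<bar>V \<theta> (fth \<theta> s + z) - V \<theta>' (fth \<theta>' s' + z)\<bar> \<le> A * d1 + B * dist (fth \<theta> s) (fth \<theta>' s')"
        using IH[OF th, of "fth \<theta> s + z" "fth \<theta>' s' + z"] by (simp add: d1_def dist_norm)
    qed
    have hI2: "\<bar>(\<integral>z. V \<theta> (fth \<theta> s + z) \<partial>p) - (\<integral>z. V \<theta>' (fth \<theta>' s' + z) \<partial>p)\<bar>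
        \<le> A * d1 + B * M * (d1 + d2)"
      using hI mult_left_mono[OF hf B0] by (simp add: algebra_simps)
    have eq: "Vsteps fth Rth p (Suc (Suc k)) \<theta> s - Vsteps fth Rth p (Suc (Suc k)) \<theta>' s'
      = (Rth \<theta> s - Rth \<theta>' s') + ((\<integral>z. V \<theta> (fth \<theta> s + z) \<partial>p) - (\<integral>z. V \<theta>' (fth \<theta>' s' + z) \<partial>p))"
      by (simp add: V_def)
    have "\<bar>Vsteps fth Rth p (Suc (Suc k)) \<theta> s - Vsteps fth Rth p (Suc (Suc k)) \<theta>' s'\<bar>
      \<le> LR * (d1 + d2) + (A * d1 + B * M * (d1 + d2))"
      unfolding eq using hR hI2 by linarith
    also have "\<dots> \<le> LR * M ^ Suc k * (real (Suc (Suc k)) ^ 2 * d1 + real (Suc (Suc k)) * d2)"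
    proof -
      have Mk: "1 \<le> M ^ k" using M1 by simp
      have Mk1: "M ^ k \<le> M ^ Suc k" using M1 Mk by simp
      have Mk2: "1 \<le> M ^ Suc k" using Mk Mk1 by linarith
      define n where "n = real (Suc k)"
      have n0: "0 \<le> n" by (simp add: n_def)
      have e1: "LR * d1 \<le> LR * M ^ Suc k * d1"
        using mult_right_mono[OF mult_left_mono[OF Mk2 LR0] d10] by simp
      have e2: "LR * d2 \<le> LR * M ^ Suc k * d2"
        using mult_right_mono[OF mult_left_mono[OF Mk2 LR0] d20] by simp
      have e3: "A * d1 \<le> LR * M ^ Suc k * n ^ 2 * d1"
        unfolding A_def n_def using Mk1 LR0 d10
        by (intro mult_right_mono mult_left_mono) (auto)
      have e4: "B * M = LR * M ^ Suc k * n" by (simp add: B_def n_def)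
      have "LR * (d1 + d2) + (A * d1 + B * M * (d1 + d2))
        \<le> LR * M ^ Suc k * d1 + LR * M ^ Suc k * d2 + LR * M ^ Suc k * n ^ 2 * d1
           + LR * M ^ Suc k * n * (d1 + d2)"
      proof -
        have e5: "B * M * (d1 + d2) = LR * M ^ Suc k * n * (d1 + d2)" by (simp add: e4)
        have e6: "LR * (d1 + d2) = LR * d1 + LR * d2" by (simp add: distrib_left)
        show ?thesis using e1 e2 e3 e5 e6 by linarith
      qed
      also have "\<dots> \<le> LR * M ^ Suc k * ((n + 1) ^ 2 * d1 + (n + 1) * d2)"
      proof -
        have "0 \<le> LR * M ^ Suc k * (n * d1)" using LR0 Mk2 n0 d10 by simp
        then show ?thesis by (simp add: algebra_simps power2_eq_square)
      qed
      finally show ?thesis by (simp add: n_def)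
    qed
    finally show "\<bar>Vsteps fth Rth p (Suc (Suc k)) \<theta> s - Vsteps fth Rth p (Suc (Suc k)) \<theta>' s'\<bar>
     \<le> LR * M ^ Suc k * (real (Suc (Suc k)) ^ 2 * dist \<theta> \<theta>' + real (Suc (Suc k)) * dist s s')"
      by (simp add: d1_def d2_def)
  qed
qed

theorem lemma2:
  fixes f :: "'s::euclidean_space \<Rightarrow> 'a \<Rightarrow> 's"
    and R :: "'s \<Rightarrow> 'a \<Rightarrow> real"
    and \<pi> :: "'p::euclidean_space \<Rightarrow> 's \<Rightarrow> 'a"
    and \<Theta> :: "'p set"
    and p :: "'s measure"
    and T :: nat
    and L_f L_R L_df :: real
  defines "f\<theta> \<equiv> (\<lambda>\<theta> s. f s (\<pi> \<theta> s))"
    and "R\<theta> \<equiv> (\<lambda>\<theta> s. R s (\<pi> \<theta> s))"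
  assumes p_prob: "prob_space p"
    and p_borel: "sets p = sets borel"
    and f_lip: "L_f-lipschitz_on (\<Theta> \<times> UNIV) (\<lambda>(\<theta>, s). f\<theta> \<theta> s)"
    and R_lip: "L_R-lipschitz_on (\<Theta> \<times> UNIV) (\<lambda>(\<theta>, s). R\<theta> \<theta> s)"
    and f_C2: "C2_lip_deriv (\<lambda>(\<theta>, s). f\<theta> \<theta> s) (\<Theta> \<times> UNIV) L_df"
    and R_C2: "\<exists>L_dR. C2_lip_deriv (\<lambda>(\<theta>, s). R\<theta> \<theta> s) (\<Theta> \<times> UNIV) L_dR"
  shows "\<forall>t \<le> T. \<exists>L_V.
           L_V-lipschitz_on (\<Theta> \<times> UNIV) (\<lambda>(\<theta>, s). Vval f\<theta> R\<theta> p T t \<theta> s) \<and>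
           L_V \<le> 3 * real T ^ 2 * L_R * (max L_df (max L_f 1)) powi (int T - int t - 1)"
proof (intro allI impI)
  fix t assume tT: "t \<le> T"
  define M where "M = max L_df (max L_f 1)"
  have M1: "1 \<le> M" and LfM: "L_f \<le> M" unfolding M_def by auto
  have LR0: "0 \<le> L_R" using R_lip by (auto simp: lipschitz_on_def)
  have Mpos: "0 < M" using M1 by simp
  show "\<exists>L_V.
           L_V-lipschitz_on (\<Theta> \<times> UNIV) (\<lambda>(\<theta>, s). Vval f\<theta> R\<theta> p T t \<theta> s) \<and>
           L_V \<le> 3 * real T ^ 2 * L_R * (max L_df (max L_f 1)) powi (int T - int t - 1)"
  proof (cases "T - t")
    case 0
    have pw: "0 \<le> M powi (int T - int t - 1)" using Mpos by simp
    show ?thesis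
    proof (intro exI conjI)
      show "0-lipschitz_on (\<Theta> \<times> UNIV) (\<lambda>(\<theta>, s). Vval f\<theta> R\<theta> p T t \<theta> s)"
        by (simp add: lipschitz_on_def Vval_def 0 case_prod_beta)
      show "0 \<le> 3 * real T ^ 2 * L_R * (max L_df (max L_f 1)) powi (int T - int t - 1)"
        using pw LR0 unfolding M_def by simp
    qed
  next
    case (Suc k)
    define n where "n = real (Suc k)"
    have n0: "0 \<le> n" by (simp add: n_def)
    have Mk: "0 \<le> M ^ k" using M1 by simp
    note VB = V_bound[OF p_prob p_borel f_lip R_lip M1 LfM, of k]
    show ?thesis
    proof (intro exI conjI)
      show "(L_R * M ^ k * (n ^ 2 + n))-lipschitz_on (\<Theta> \<times> UNIV) (\<lambda>(\<theta>, s). Vval f\<theta> R\<theta> p T t \<theta> s)"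
      proof (rule lipschitz_onI)
        fix x y :: "'p \<times> 's" assume x: "x \<in> \<Theta> \<times> UNIV" and y: "y \<in> \<Theta> \<times> UNIV"
        obtain a b where xab: "x = (a, b)" by (cases x)
        obtain c d where ycd: "y = (c, d)" by (cases y)
        have ac: "a \<in> \<Theta>" "c \<in> \<Theta>" using x y xab ycd by auto
        have d1: "dist a c \<le> dist x y" using dist_fst_le[of x y] xab ycd by simp
        have d2: "dist b d \<le> dist x y" using dist_snd_le[of x y] xab ycd by simp
        have "dist (Vval f\<theta> R\<theta> p T t a b) (Vval f\<theta> R\<theta> p T t c d)
           \<le> L_R * M ^ k * (n ^ 2 * dist a c + n * dist b d)"
          using VB ac by (simp add: Vval_def Suc dist_real_def n_def)
        also have "\<dots> \<le> L_R * M ^ k * (n ^ 2 * dist x y + n * dist x y)"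
          using LR0 Mk n0 d1 d2
          by (intro mult_left_mono add_mono mult_left_mono) auto
        also have "\<dots> = L_R * M ^ k * (n ^ 2 + n) * dist x y" by (simp add: algebra_simps)
        finally show "dist ((\<lambda>(\<theta>, s). Vval f\<theta> R\<theta> p T t \<theta> s) x) ((\<lambda>(\<theta>, s). Vval f\<theta> R\<theta> p T t \<theta> s) y)
           \<le> L_R * M ^ k * (n ^ 2 + n) * dist x y" using xab ycd by simp
      next
        show "0 \<le> L_R * M ^ k * (n ^ 2 + n)" using LR0 Mk n0 by simp
      qed
      have nT: "n \<le> real T" using Suc tT unfolding n_def by linarith
      have n1: "1 \<le> n" by (simp add: n_def)
      have "n ^ 2 + n \<le> 3 * real T ^ 2"
      proof -
        have "n \<le> n ^ 2" using n1 by (simp add: power2_eq_square)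
        moreover have "n ^ 2 \<le> real T ^ 2" by (rule power_mono[OF nT n0])
        moreover have "0 \<le> real T ^ 2" by simp
        ultimately show ?thesis by linarith
      qed
      then have "L_R * M ^ k * (n ^ 2 + n) \<le> L_R * M ^ k * (3 * real T ^ 2)"
        using LR0 Mk by (intro mult_left_mono) auto
      moreover have "M powi (int T - int t - 1) = M ^ k"
      proof -
        have "int T - int t - 1 = int k" using Suc tT by linarith
        then show ?thesis by (simp add: power_int_of_nat)
      qed
      ultimately show "L_R * M ^ k * (n ^ 2 + n) \<le> 3 * real T ^ 2 * L_R * (max L_df (max L_f 1)) powi (int T - int t - 1)"
        unfolding M_def[symmetric] by (simp add: algebra_simps)
    qed
  qed
qed

end
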